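(* Let $a<b$ be real numbers and $\varphi:(a,b)\to\mathbb R$ a continuous function. Then for almost every $x\in(a,b)$ one of the following holds: (i) $\varphi$ is differentiable at $x$; (ii) there is a sequence $(x_k)_{k\in\mathbb N}$ converging to $x$ such that $0\in\partial^-\varphi(x_k)$ for all $k$, in particular $0\in\partial^-_L\varphi(x)$.
   Context: For $y\in(a,b)$, the viscosity subdifferential $\partial^-\varphi(y)$ is the set of $p\in\mathbb R$ such that there is a $C^1$ function $\psi$ on an open neighborhood $V$ of $y$ with $\psi(y)=\varphi(y)$, $\psi\leq\varphi$ on $V$ and $\psi'(y)=p$. The limiting subdifferential $\partial^-_L\varphi(x)$ is the set of $p$ for which there is a sequence $(x_k,p_k)\to(x,p)$ with $p_k\in\partial^-\varphi(x_k)$. *)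

theory Defs
  imports "HOL-Analysis.Analysis"
begin

definition C1_on :: "real set \<Rightarrow> (real \<Rightarrow> real) \<Rightarrow> bool" where
  "C1_on V \<psi> \<longleftrightarrow> (\<exists>\<psi>'. (\<forall>z\<in>V. (\<psi> has_real_derivative \<psi>' z) (at z)) \<and> continuous_on V \<psi>')"

definition visc_subdiff :: "real \<Rightarrow> real \<Rightarrow> (real \<Rightarrow> real) \<Rightarrow> real \<Rightarrow> real set" where
  "visc_subdiff a b \<phi> y = {p. \<exists>V \<psi>. open V \<and> y \<in> V \<and> V \<subseteq> {a<..<b} \<and> C1_on V \<psi> \<and>
      \<psi> y = \<phi> y \<and> (\<forall>z\<in>V. \<psi> z \<le> \<phi> z) \<and> (\<psi> has_real_derivative p) (at y)}"

definition lim_subdiff :: "real \<Rightarrow> real \<Rightarrow> (real \<Rightarrow> real) \<Rightarrow> real \<Rightarrow> real set" where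
  "lim_subdiff a b \<phi> x = {p. \<exists>xs ps. (\<forall>k. xs k \<in> {a<..<b} \<and> ps k \<in> visc_subdiff a b \<phi> (xs k)) \<and>
      xs \<longlonglongrightarrow> x \<and> ps \<longlonglongrightarrow> p}"

end

theory Submission
  imports Defs
begin


lemma countable_negligible: "countable (A::real set) \<Longrightarrow> negligible A"
proof -
  assume "countable A"
  then have "negligible (\<Union>((\<lambda>x. {x}) ` A))"
    by (intro negligible_countable_Union) auto
  then show ?thesis by simp
qed

lemma leb_Icc: "u \<le> v \<Longrightarrow> emeasure lebesgue {u..v::real} = ennreal (v - u)"
  by (simp add: emeasure_lborel_Icc)

lemma vitali_intervals:
  fixes S :: "real set"
  assumes cov: "\<And>x d. x \<in> S \<Longrightarrow> d > 0 \<Longrightarrow> \<exists>u v. u \<le> x \<and> x \<le> v \<and> u < v \<and> v - u < d \<and> P u v"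
  obtains C where "countable C" "\<And>u v. (u,v) \<in> C \<Longrightarrow> u < v \<and> P u v"
    "disjoint_family_on (\<lambda>(u,v). {u..v}) C"
    "negligible (S - (\<Union>(u,v)\<in>C. {u..v}))"
proof -
  let ?K = "{(u,v). u < v \<and> P u v}"
  let ?a = "\<lambda>(u::real,v::real). (u+v)/2"
  let ?r = "\<lambda>(u::real,v::real). (v-u)/2"
  have cb: "cball (?a i) (?r i) = (\<lambda>(u,v). {u..v}) i" for i
    by (cases i) (auto simp: cball_eq_atLeastAtMost field_simps)
  obtain C where C: "countable C" "C \<subseteq> ?K"
     "pairwise (\<lambda>i j. disjnt (cball (?a i) (?r i)) (cball (?a j) (?r j))) C"
     "negligible(S - (\<Union>i \<in> C. cball (?a i) (?r i)))"
  proof (rule Vitali_covering_theorem_cballs[of ?K ?r S ?a])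
    show "\<And>i. i \<in> ?K \<Longrightarrow> 0 < ?r i" by auto
    fix x d assume "x \<in> S" "(0::real) < d"
    then obtain u v where uv: "u \<le> x \<and> x \<le> v \<and> u < v \<and> v - u < d \<and> P u v"
      using cov[of x d] by auto
    show "\<exists>i. i \<in> ?K \<and> x \<in> cball (?a i) (?r i) \<and> ?r i < d"
      apply (rule exI[of _ "(u,v)"])
      using uv \<open>0 < d\<close> by (auto simp: cball_eq_atLeastAtMost field_simps)
  qed blast
  show ?thesis
  proof (rule that[OF C(1)])
    show "\<And>u v. (u,v) \<in> C \<Longrightarrow> u < v \<and> P u v" using C(2) by auto
    show "disjoint_family_on (\<lambda>(u,v). {u..v}) C"
      using C(3) unfolding disjoint_family_on_def pairwise_def disjnt_def cb by blast
    show "negligible (S - (\<Union>(u,v)\<in>C. {u..v}))"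
      using C(4) unfolding cb by simp
  qed
qed

lemma lemA:
  fixes F :: "real \<Rightarrow> real" and r :: real
  assumes mono: "\<And>x y. x \<le> y \<Longrightarrow> F x \<le> F y" and cont: "continuous_on UNIV F" and r: "r \<ge> 0"
    and Om: "open Om" "E \<subseteq> Om"
    and lo: "\<And>x d. x \<in> E \<Longrightarrow> d > 0 \<Longrightarrow> \<exists>u v. u \<le> x \<and> x \<le> v \<and> u < v \<and> v - u < d \<and> F v - F u < r * (v - u)"
  obtains G where "open G" "G \<subseteq> Om" "negligible (E - G)"
    "emeasure (interval_measure F) G \<le> ennreal r * emeasure lebesgue Om"
proof -
  let ?P = "\<lambda>u v. {u..v} \<subseteq> Om \<and> F v - F u < r * (v - u)"
  obtain C where C: "countable C" "\<And>u v. (u,v) \<in> C \<Longrightarrow> u < v \<and> ?P u v"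
    "disjoint_family_on (\<lambda>(u,v). {u..v}) C"
    "negligible (E - (\<Union>(u,v)\<in>C. {u..v}))"
  proof (rule vitali_intervals[of E ?P])
    fix x d assume x: "x \<in> E" and d: "(0::real) < d"
    obtain \<eta> where eta: "\<eta> > 0" "ball x \<eta> \<subseteq> Om" using Om x by (meson openE subsetD)
    obtain u v where uv: "u \<le> x" "x \<le> v" "u < v" "v - u < min d \<eta>" "F v - F u < r * (v - u)"
      using lo[OF x, of "min d \<eta>"] d eta by auto
    have "{u..v} \<subseteq> ball x \<eta>" using uv by (auto simp: dist_real_def)
    then show "\<exists>u v. u \<le> x \<and> x \<le> v \<and> u < v \<and> v - u < d \<and> ?P u v"
      using uv eta by (intro exI[of _ u] exI[of _ v]) auto
  qed blast
  let ?G = "\<Union>(u,v)\<in>C. {u<..<v}"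
  let ?I = "\<lambda>(u::real,v::real). {u..v}"
  show ?thesis
  proof (rule that)
    show "open ?G" by auto
    show "?G \<subseteq> Om" using C(2) by fastforce
    have "E - ?G \<subseteq> (E - (\<Union>(u,v)\<in>C. {u..v})) \<union> (fst ` C \<union> snd ` C)"
      by force
    moreover have "negligible (fst ` C \<union> snd ` C)"
      using C(1) by (intro countable_negligible) auto
    ultimately show "negligible (E - ?G)"
      using C(4) negligible_Un negligible_subset by metis
    have sI: "?I i \<in> sets borel" for i by (cases i) auto
    have UI: "(\<Union>i\<in>C. ?I i) \<in> sets borel"
      using C(1) sI by (intro sets.countable_UN'') auto
    have "emeasure (interval_measure F) ?G \<le> emeasure (interval_measure F) (\<Union>i\<in>C. ?I i)"
      using UI by (intro emeasure_mono) (auto simp: case_prod_unfold)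
    also have "\<dots> = (\<integral>\<^sup>+i. emeasure (interval_measure F) (?I i) \<partial>count_space C)"
      using C(1,3) sI by (intro emeasure_UN_countable) auto
    also have "\<dots> \<le> (\<integral>\<^sup>+i. ennreal r * emeasure lebesgue (?I i) \<partial>count_space C)"
    proof (intro nn_integral_mono)
      fix i assume "i \<in> space (count_space C)"
      then obtain u v where i: "i = (u,v)" "(u,v) \<in> C" by (cases i) auto
      then have uv: "u < v" "F v - F u < r * (v - u)" using C(2) by auto
      have "emeasure (interval_measure F) (?I i) = ennreal (F v - F u)"
        using i uv by (simp add: emeasure_interval_measure_Icc mono cont)
      also have "\<dots> \<le> ennreal (r * (v - u))" using uv by (intro ennreal_leI) auto
      also have "\<dots> = ennreal r * emeasure lebesgue (?I i)"
        using i uv r by (simp add: leb_Icc ennreal_mult)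
      finally show "emeasure (interval_measure F) (?I i) \<le> ennreal r * emeasure lebesgue (?I i)" .
    qed
    also have "\<dots> = ennreal r * (\<integral>\<^sup>+i. emeasure lebesgue (?I i) \<partial>count_space C)"
      by (rule nn_integral_cmult) simp
    also have "(\<integral>\<^sup>+i. emeasure lebesgue (?I i) \<partial>count_space C) = emeasure lebesgue (\<Union>i\<in>C. ?I i)"
      using C(1,3) sI by (intro emeasure_UN_countable[symmetric]) auto
    also have "emeasure lebesgue (\<Union>i\<in>C. ?I i) \<le> emeasure lebesgue Om"
      using C(2) Om UI by (intro emeasure_mono) (fastforce simp: case_prod_unfold)+
    finally show "emeasure (interval_measure F) ?G \<le> ennreal r * emeasure lebesgue Om"
      by (simp add: mult_left_mono)
  qed
qed

lemma lemB:
  fixes F :: "real \<Rightarrow> real" and s :: real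
  assumes mono: "\<And>x y. x \<le> y \<Longrightarrow> F x \<le> F y" and cont: "continuous_on UNIV F" and s: "s \<ge> 0"
    and G: "open G"
    and hi: "\<And>x d. x \<in> E \<Longrightarrow> d > 0 \<Longrightarrow> \<exists>u v. u \<le> x \<and> x \<le> v \<and> u < v \<and> v - u < d \<and> F v - F u > s * (v - u)"
  obtains T where "T \<in> sets lebesgue" "E \<inter> G \<subseteq> T"
    "ennreal s * emeasure lebesgue T \<le> emeasure (interval_measure F) G"
proof -
  let ?P = "\<lambda>u v. {u..v} \<subseteq> G \<and> F v - F u > s * (v - u)"
  obtain C where C: "countable C" "\<And>u v. (u,v) \<in> C \<Longrightarrow> u < v \<and> ?P u v"
    "disjoint_family_on (\<lambda>(u,v). {u..v}) C"
    "negligible (E \<inter> G - (\<Union>(u,v)\<in>C. {u..v}))"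
  proof (rule vitali_intervals[of "E \<inter> G" ?P])
    fix x d assume x: "x \<in> E \<inter> G" and d: "(0::real) < d"
    obtain \<eta> where eta: "\<eta> > 0" "ball x \<eta> \<subseteq> G" using G x by (meson IntD2 openE)
    obtain u v where uv: "u \<le> x" "x \<le> v" "u < v" "v - u < min d \<eta>" "F v - F u > s * (v - u)"
      using hi[of x "min d \<eta>"] x d eta by auto
    have "{u..v} \<subseteq> ball x \<eta>" using uv by (auto simp: dist_real_def)
    then show "\<exists>u v. u \<le> x \<and> x \<le> v \<and> u < v \<and> v - u < d \<and> ?P u v"
      using uv eta by (intro exI[of _ u] exI[of _ v]) auto
  qed blast
  let ?I = "\<lambda>(u::real,v::real). {u..v}"
  let ?N = "E \<inter> G - (\<Union>(u,v)\<in>C. {u..v})"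
  have sI: "?I i \<in> sets borel" for i by (cases i) auto
  have UI: "(\<Union>i\<in>C. ?I i) \<in> sets borel"
    using C(1) sI by (intro sets.countable_UN'') auto
  have N: "?N \<in> null_sets lebesgue" using C(4) negligible_iff_null_sets by blast
  show ?thesis
  proof (rule that[of "(\<Union>i\<in>C. ?I i) \<union> ?N"])
    have "(\<Union>i\<in>C. ?I i) \<in> sets lebesgue" using UI by (simp add: sets_completionI_sets)
    then show "(\<Union>i\<in>C. ?I i) \<union> ?N \<in> sets lebesgue" using N by (intro sets.Un) auto
    show "E \<inter> G \<subseteq> (\<Union>i\<in>C. ?I i) \<union> ?N" by auto
    have "ennreal s * emeasure lebesgue ((\<Union>i\<in>C. ?I i) \<union> ?N) = ennreal s * emeasure lebesgue (\<Union>i\<in>C. ?I i)"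
      using UI N by (subst emeasure_Un_null_set) auto
    also have "emeasure lebesgue (\<Union>i\<in>C. ?I i) = (\<integral>\<^sup>+i. emeasure lebesgue (?I i) \<partial>count_space C)"
      using C(1,3) sI by (intro emeasure_UN_countable) auto
    also have "ennreal s * \<dots> = (\<integral>\<^sup>+i. ennreal s * emeasure lebesgue (?I i) \<partial>count_space C)"
      by (rule nn_integral_cmult[symmetric]) simp
    also have "\<dots> \<le> (\<integral>\<^sup>+i. emeasure (interval_measure F) (?I i) \<partial>count_space C)"
    proof (intro nn_integral_mono)
      fix i assume "i \<in> space (count_space C)"
      then obtain u v where i: "i = (u,v)" "(u,v) \<in> C" by (cases i) auto
      then have uv: "u < v" "F v - F u > s * (v - u)" using C(2) by auto
      have "ennreal s * emeasure lebesgue (?I i) = ennreal (s * (v - u))"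
        using i uv s by (simp add: leb_Icc ennreal_mult)
      also have "\<dots> \<le> ennreal (F v - F u)" using uv by (intro ennreal_leI) auto
      also have "\<dots> = emeasure (interval_measure F) (?I i)"
        using i uv by (simp add: emeasure_interval_measure_Icc mono cont)
      finally show "ennreal s * emeasure lebesgue (?I i) \<le> emeasure (interval_measure F) (?I i)" .
    qed
    also have "\<dots> = emeasure (interval_measure F) (\<Union>i\<in>C. ?I i)"
      using C(1,3) sI by (intro emeasure_UN_countable[symmetric]) auto
    also have "\<dots> \<le> emeasure (interval_measure F) G"
      using C(2) G UI by (intro emeasure_mono) (fastforce simp: case_prod_unfold)+
    finally show "ennreal s * emeasure lebesgue ((\<Union>i\<in>C. ?I i) \<union> ?N) \<le> emeasure (interval_measure F) G" .
  qed
qed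

lemma outer_le_leb: "T \<in> sets lebesgue \<Longrightarrow> E \<subseteq> T \<Longrightarrow> outer_measure_of lebesgue E \<le> emeasure lebesgue T"
proof -
  assume T: "T \<in> sets lebesgue" and ET: "E \<subseteq> T"
  have "outer_measure_of lebesgue E \<le> outer_measure_of lebesgue T" by (rule outer_measure_of_mono[OF ET])
  also have "\<dots> = emeasure lebesgue T" by (rule outer_measure_of_eq[OF T])
  finally show ?thesis .
qed

lemma outer_zero_negligible:
  assumes "outer_measure_of lebesgue E = 0" shows "negligible E"
proof -
  have "\<exists>H\<in>sets lebesgue. E \<subseteq> H \<and> outer_measure_of lebesgue E = emeasure lebesgue H"
    by (rule outer_measure_of_attain) simp
  then obtain H where H: "H \<in> sets lebesgue" "E \<subseteq> H" "outer_measure_of lebesgue E = emeasure lebesgue H"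
    by blast
  have "emeasure lebesgue H = 0" using H(3) assms by simp
  then have "H \<in> null_sets lebesgue" by (rule null_setsI[OF _ H(1)])
  then have "E \<in> null_sets lebesgue" by (rule null_sets_completion_subset[OF H(2)])
  then show ?thesis by (simp add: negligible_iff_null_sets)
qed

lemma outer_finite:
  assumes "E \<subseteq> {c..d::real}"
  obtains m where "outer_measure_of lebesgue E = ennreal m" "m \<ge> 0"
proof -
  have "outer_measure_of lebesgue E \<le> emeasure lebesgue {c..d}"
    by (rule outer_le_leb[OF _ assms]) simp
  also have "\<dots> < \<infinity>" by (simp add: emeasure_lborel_Icc_eq)
  finally have lt: "outer_measure_of lebesgue E < \<infinity>" .
  show ?thesis
    by (rule that[of "enn2real (outer_measure_of lebesgue E)"])
       (use lt in \<open>simp_all add: ennreal_enn2real\<close>)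
qed

lemma lemM:
  fixes F :: "real \<Rightarrow> real" and r s :: real
  assumes mono: "\<And>x y. x \<le> y \<Longrightarrow> F x \<le> F y" and cont: "continuous_on UNIV F"
    and r: "0 \<le> r" and rs: "r < s" and E: "E \<subseteq> {c..d}"
    and lo: "\<And>x d. x \<in> E \<Longrightarrow> d > 0 \<Longrightarrow> \<exists>u v. u \<le> x \<and> x \<le> v \<and> u < v \<and> v - u < d \<and> F v - F u < r * (v - u)"
    and hi: "\<And>x d. x \<in> E \<Longrightarrow> d > 0 \<Longrightarrow> \<exists>u v. u \<le> x \<and> x \<le> v \<and> u < v \<and> v - u < d \<and> F v - F u > s * (v - u)"
  shows "negligible E"
proof -
  let ?m = "outer_measure_of lebesgue E"
  have "\<exists>H\<in>sets lebesgue. E \<subseteq> H \<and> ?m = emeasure lebesgue H"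
    by (rule outer_measure_of_attain) simp
  then obtain H where H: "H \<in> sets lebesgue" "E \<subseteq> H" "?m = emeasure lebesgue H"
    by blast
  obtain m where m: "?m = ennreal m" "m \<ge> 0" using outer_finite[OF E] by blast
  have key: "s * m \<le> r * (m + e)" if e: "e > 0" for e
  proof -
    obtain Om where Om: "open Om" "H \<subseteq> Om" "(Om - H) \<in> lmeasurable" "emeasure lebesgue (Om - H) < ennreal e"
      using sets_lebesgue_outer_open[OF H(1) e] by blast
    have "emeasure lebesgue Om = emeasure lebesgue (H \<union> (Om - H))" using Om(2)
      by (simp add: Un_absorb1)
    also have "\<dots> \<le> emeasure lebesgue H + emeasure lebesgue (Om - H)"
      using H(1) Om(3) by (intro emeasure_subadditive) auto
    also have "\<dots> \<le> ennreal m + ennreal e" using H m Om(4) by (intro add_mono) auto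
    finally have Oms: "emeasure lebesgue Om \<le> ennreal (m + e)" using m e by (simp add: ennreal_plus)
    have EOm: "E \<subseteq> Om" using H(2) Om(2) by auto
    obtain G where G: "open G" "G \<subseteq> Om" "negligible (E - G)"
      "emeasure (interval_measure F) G \<le> ennreal r * emeasure lebesgue Om"
      by (rule lemA[OF mono cont r Om(1) EOm lo])
    have s0: "s \<ge> 0" using rs r by auto
    obtain T where T: "T \<in> sets lebesgue" "E \<inter> G \<subseteq> T"
      "ennreal s * emeasure lebesgue T \<le> emeasure (interval_measure F) G"
      by (rule lemB[OF mono cont s0 G(1) hi])
    have N: "E - G \<in> null_sets lebesgue" using G(3) negligible_iff_null_sets by blast
    have "?m \<le> emeasure lebesgue (T \<union> (E - G))"
      using T N by (intro outer_le_leb) auto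
    also have "\<dots> = emeasure lebesgue T" using T N by (intro emeasure_Un_null_set) auto
    finally have "ennreal s * ennreal m \<le> ennreal s * emeasure lebesgue T"
      using m by (intro mult_left_mono) auto
    also have "\<dots> \<le> ennreal r * emeasure lebesgue Om" using T G by order
    also have "\<dots> \<le> ennreal r * ennreal (m + e)" using Oms by (intro mult_left_mono) auto
    finally have "ennreal (s * m) \<le> ennreal (r * (m + e))"
      using r rs m e by (simp add: ennreal_mult)
    then show ?thesis using r m e by (simp add: ennreal_le_iff)
  qed
  have "m = 0"
  proof (cases "r = 0")
    case True
    then have "s * m \<le> 0" using key[of 1] by simp
    then show ?thesis using rs True m(2) by (simp add: mult_le_0_iff)
  next
    case False
    then have rp: "r > 0" using r by auto
    show ?thesis
    proof (rule ccontr)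
      assume "m \<noteq> 0"
      then have mp: "m > 0" using m by auto
      have "s * m \<le> r * (m + (s - r) * m / (2 * r))"
        using key[of "(s - r) * m / (2 * r)"] rp rs mp by simp
      also have "\<dots> = r * m + (s * m - r * m) / 2" using rp by (simp add: field_simps)
      finally have A: "s * m \<le> r * m + (s * m - r * m) / 2" .
      have aux: "\<And>X Y::real. X \<le> Y + (X - Y) / 2 \<Longrightarrow> X - Y \<le> 0" by argo
      have "s * m - r * m \<le> 0" by (rule aux[OF A])
      then have "(s - r) * m \<le> 0" by (simp add: left_diff_distrib)
      then show False using rs mp by (simp add: mult_le_0_iff)
    qed
  qed
  then have "?m = 0" using m(1) by simp
  then show ?thesis by (rule outer_zero_negligible)
qed

definition lo_pt :: "(real \<Rightarrow> real) \<Rightarrow> real \<Rightarrow> real \<Rightarrow> bool" where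
  "lo_pt F r x \<longleftrightarrow> (\<forall>d>0. \<exists>u v. u \<le> x \<and> x \<le> v \<and> u < v \<and> v - u < d \<and> F v - F u < r * (v - u))"

definition hi_pt :: "(real \<Rightarrow> real) \<Rightarrow> real \<Rightarrow> real \<Rightarrow> bool" where
  "hi_pt F s x \<longleftrightarrow> (\<forall>d>0. \<exists>u v. u \<le> x \<and> x \<le> v \<and> u < v \<and> v - u < d \<and> F v - F u > s * (v - u))"

lemma lemInf:
  fixes F :: "real \<Rightarrow> real"
  assumes mono: "\<And>x y. x \<le> y \<Longrightarrow> F x \<le> F y" and cont: "continuous_on UNIV F"
    and E: "E \<subseteq> {c..d}" and hi: "\<And>n x. x \<in> E \<Longrightarrow> hi_pt F (real n) x"
  shows "negligible E"
proof (cases "E = {}")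
  case True then show ?thesis by simp
next
  case False
  then have cd: "c \<le> d" using E by auto
  let ?m = "outer_measure_of lebesgue E"
  let ?G = "{c-1<..<d+1}"
  let ?W = "F (d+1) - F (c-1)"
  obtain m where m: "?m = ennreal m" "m \<ge> 0" using outer_finite[OF E] by blast
  have "emeasure (interval_measure F) ?G \<le> emeasure (interval_measure F) {c-1..d+1}"
    by (intro emeasure_mono) auto
  also have "\<dots> = ennreal ?W" using cd by (intro emeasure_interval_measure_Icc mono cont) auto
  finally have V: "emeasure (interval_measure F) ?G \<le> ennreal ?W" .
  have W0: "?W \<ge> 0" using mono[of "c-1" "d+1"] cd by simp
  have bound: "real n * m \<le> ?W" for n :: nat
  proof -
    have hi': "\<And>x d. x \<in> E \<Longrightarrow> d > 0 \<Longrightarrow> \<exists>u v. u \<le> x \<and> x \<le> v \<and> u < v \<and> v - u < d \<and> F v - F u > real n * (v - u)"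
      using hi unfolding hi_pt_def by blast
    have n0: "real n \<ge> 0" by simp
    have Gopen: "open ?G" by simp
    obtain T where T: "T \<in> sets lebesgue" "E \<inter> ?G \<subseteq> T"
      "ennreal (real n) * emeasure lebesgue T \<le> emeasure (interval_measure F) ?G"
      by (rule lemB[OF mono cont n0 Gopen hi'])
    have "E \<subseteq> E \<inter> ?G" using E by fastforce
    then have "E \<subseteq> T" using T(2) by blast
    then have "?m \<le> emeasure lebesgue T" using T(1) by (intro outer_le_leb) auto
    then have "ennreal (real n) * ennreal m \<le> ennreal (real n) * emeasure lebesgue T"
      using m by (intro mult_left_mono) auto
    also have "\<dots> \<le> ennreal ?W" using T(3) V by order
    finally have "ennreal (real n * m) \<le> ennreal ?W" using m by (simp add: ennreal_mult)
    then show ?thesis using W0 by (simp add: ennreal_le_iff)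
  qed
  have "m = 0"
  proof (rule ccontr)
    assume "m \<noteq> 0"
    then have mp: "m > 0" using m by auto
    obtain n :: nat where n: "?W / m < real n" using reals_Archimedean2 by blast
    then have "?W < real n * m" using mp by (simp add: divide_less_eq)
    then show False using bound[of n] by simp
  qed
  then have "?m = 0" using m(1) by simp
  then show ?thesis by (rule outer_zero_negligible)
qed

lemma dini_diff:
  fixes F :: "real \<Rightarrow> real"
  assumes mono: "\<And>x y. x \<le> y \<Longrightarrow> F x \<le> F y"
    and notinf: "\<not> (\<forall>n::nat. hi_pt F (real n) x)"
    and nors: "\<And>r s. r \<in> \<rat> \<Longrightarrow> s \<in> \<rat> \<Longrightarrow> 0 \<le> r \<Longrightarrow> r < s \<Longrightarrow> \<not> (lo_pt F r x \<and> hi_pt F s x)"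
  shows "F differentiable (at x)"
proof -
  define Q where "Q u v = (F v - F u) / (v - u)" for u v
  define Ev where "Ev P \<longleftrightarrow> (\<exists>\<delta>>0. \<forall>u v. u \<le> x \<longrightarrow> x \<le> v \<longrightarrow> u < v \<longrightarrow> v - u < \<delta> \<longrightarrow> P (Q u v))" for P
  have Q0: "Q u v \<ge> 0" if "u < v" for u v
    using mono[of u v] that by (simp add: Q_def)
  have hiEv: "\<not> hi_pt F s x \<longleftrightarrow> Ev (\<lambda>q. q \<le> s)" for s
  proof -
    have "F v - F u \<le> s * (v - u) \<longleftrightarrow> Q u v \<le> s" if "u < v" for u v
      using that by (simp add: Q_def divide_le_eq)
    then show ?thesis unfolding hi_pt_def Ev_def by (auto simp: not_less) (metis not_less)+
  qed
  have loEv: "\<not> lo_pt F r x \<longleftrightarrow> Ev (\<lambda>q. q \<ge> r)" for r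
  proof -
    have "F v - F u \<ge> r * (v - u) \<longleftrightarrow> Q u v \<ge> r" if "u < v" for u v
      using that by (simp add: Q_def le_divide_eq)
    then show ?thesis unfolding lo_pt_def Ev_def by (auto simp: not_less) (metis not_less)+
  qed
  have Ev_conj: "Ev (\<lambda>q. P q \<and> R q)" if e1: "Ev P" and e2: "Ev R" for P R
  proof -
    obtain d1 where d1: "d1 > 0" "\<forall>u v. u \<le> x \<longrightarrow> x \<le> v \<longrightarrow> u < v \<longrightarrow> v - u < d1 \<longrightarrow> P (Q u v)"
      using e1 unfolding Ev_def by blast
    obtain d2 where d2: "d2 > 0" "\<forall>u v. u \<le> x \<longrightarrow> x \<le> v \<longrightarrow> u < v \<longrightarrow> v - u < d2 \<longrightarrow> R (Q u v)"
      using e2 unfolding Ev_def by blast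
    show ?thesis unfolding Ev_def
      by (rule exI[of _ "min d1 d2"]) (use d1 d2 in auto)
  qed
  have Ev_mono: "Ev R" if "Ev P" "\<And>q. P q \<Longrightarrow> R q" for P R
    using that unfolding Ev_def by blast
  let ?S = "{s. Ev (\<lambda>q. q \<le> s)}"
  obtain n :: nat where "\<not> hi_pt F (real n) x" using notinf by blast
  then have nS: "real n \<in> ?S" using hiEv by simp
  have S0: "s \<ge> 0" if sS: "s \<in> ?S" for s
  proof -
    obtain \<delta> where d: "\<delta> > 0" "\<forall>u v. u \<le> x \<longrightarrow> x \<le> v \<longrightarrow> u < v \<longrightarrow> v - u < \<delta> \<longrightarrow> Q u v \<le> s"
      using sS unfolding Ev_def by blast
    then have "Q x (x + \<delta>/2) \<le> s" by auto
    moreover have "Q x (x + \<delta>/2) \<ge> 0" using d by (intro Q0) auto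
    ultimately show ?thesis by linarith
  qed
  have bdd: "bdd_below ?S" using S0 by (intro bdd_belowI[of _ 0]) auto
  define L where "L = Inf ?S"
  have close: "Ev (\<lambda>q. \<bar>q - L\<bar> < e)" if e: "e > 0" for e
  proof -
    have up: "Ev (\<lambda>q. q < L + e)"
    proof -
      have "Inf ?S < L + e" using e by (simp add: L_def)
      then obtain s where s: "s \<in> ?S" "s < L + e"
        using cInf_lessD[of ?S "L + e"] nS by blast
      have "Ev (\<lambda>q. q \<le> s)" using s(1) by simp
      then show ?thesis by (rule Ev_mono) (use s in auto)
    qed
    have low: "Ev (\<lambda>q. q > L - e)"
    proof (cases "L - e < 0")
      case True
      have "Ev (\<lambda>q. q \<ge> 0)" unfolding Ev_def using Q0 by (intro exI[of _ 1]) auto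
      then show ?thesis by (rule Ev_mono) (use True in auto)
    next
      case False
      obtain r where r: "r \<in> \<rat>" "L - e < r" "r < L - e/2"
        using Rats_dense_in_real[of "L - e" "L - e/2"] e by auto
      obtain s where s: "s \<in> \<rat>" "L - e/2 < s" "s < L"
        using Rats_dense_in_real[of "L - e/2" L] e by auto
      have "s \<notin> ?S"
      proof
        assume "s \<in> ?S"
        then have "L \<le> s" unfolding L_def using bdd by (intro cInf_lower)
        then show False using s by simp
      qed
      then have "hi_pt F s x" using hiEv by auto
      then have "\<not> lo_pt F r x" using nors[of r s] r s False by auto
      then have "Ev (\<lambda>q. q \<ge> r)" using loEv by simp
      then show ?thesis by (rule Ev_mono) (use r in auto)
    qed
    show ?thesis by (rule Ev_mono[OF Ev_conj[OF up low]]) auto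
  qed
  have "(F has_real_derivative L) (at x)"
    unfolding has_field_derivative_iff LIM_eq
  proof (intro allI impI)
    fix e :: real assume "e > 0"
    then obtain \<delta> where d: "\<delta> > 0" "\<forall>u v. u \<le> x \<longrightarrow> x \<le> v \<longrightarrow> u < v \<longrightarrow> v - u < \<delta> \<longrightarrow> \<bar>Q u v - L\<bar> < e"
      using close unfolding Ev_def by blast
    show "\<exists>s>0. \<forall>y. y \<noteq> x \<and> norm (y - x) < s \<longrightarrow> norm ((F y - F x) / (y - x) - L) < e"
    proof (intro exI[of _ \<delta>] conjI allI impI)
      fix y assume y: "y \<noteq> x \<and> norm (y - x) < \<delta>"
      show "norm ((F y - F x) / (y - x) - L) < e"
      proof (cases "y < x")
        case True
        have "(F y - F x) / (y - x) = Q y x" unfolding Q_def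
          by (metis minus_diff_eq minus_divide_divide)
        then show ?thesis using d True y by auto
      next
        case False
        then have "x < y" using y by auto
        have "(F y - F x) / (y - x) = Q x y" unfolding Q_def by simp
        then show ?thesis using d \<open>x < y\<close> y by auto
      qed
    qed (use d in auto)
  qed
  then show ?thesis using real_differentiable_def by blast
qed

lemma mono_F_negligible:
  fixes F :: "real \<Rightarrow> real"
  assumes mono: "\<And>x y. x \<le> y \<Longrightarrow> F x \<le> F y" and cont: "continuous_on UNIV F"
  shows "negligible {x \<in> {c..d}. \<not> F differentiable (at x)}"
proof -
  let ?A = "{x \<in> {c..d}. \<forall>n::nat. hi_pt F (real n) x}"
  let ?I = "{(r::real,s::real). r \<in> \<rat> \<and> s \<in> \<rat> \<and> 0 \<le> r \<and> r < s}"
  let ?B = "(\<lambda>(r,s). {x \<in> {c..d}. lo_pt F r x \<and> hi_pt F s x}) ` ?I"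
  have sub: "{x \<in> {c..d}. \<not> F differentiable (at x)} \<subseteq> ?A \<union> \<Union>?B"
  proof
    fix x assume x: "x \<in> {x \<in> {c..d}. \<not> F differentiable (at x)}"
    show "x \<in> ?A \<union> \<Union>?B"
    proof (rule ccontr)
      assume nx: "x \<notin> ?A \<union> \<Union>?B"
      have "\<not> (\<forall>n::nat. hi_pt F (real n) x)" using nx x by auto
      moreover have "\<not> (lo_pt F r x \<and> hi_pt F s x)" if "r \<in> \<rat>" "s \<in> \<rat>" "0 \<le> r" "r < s" for r s
      proof
        assume "lo_pt F r x \<and> hi_pt F s x"
        then have "x \<in> (\<lambda>(r,s). {x \<in> {c..d}. lo_pt F r x \<and> hi_pt F s x}) (r,s)" using x by auto
        moreover have "(r,s) \<in> ?I" using that by auto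
        ultimately show False using nx by blast
      qed
      ultimately have "F differentiable (at x)" by (intro dini_diff[OF mono]) auto
      then show False using x by auto
    qed
  qed
  have nA: "negligible ?A"
    by (rule lemInf[OF mono cont, of _ c d]) auto
  have cI: "countable ?I"
  proof -
    have "?I \<subseteq> \<rat> \<times> \<rat>" by auto
    moreover have "countable (\<rat> \<times> (\<rat>::real set))" by (intro countable_SIGMA countable_rat)
    ultimately show ?thesis by (rule countable_subset)
  qed
  have nB: "negligible (\<Union>?B)"
  proof (rule negligible_countable_Union)
    show "countable ?B" using cI by simp
    fix S assume "S \<in> ?B"
    then obtain r s where rs: "r \<in> \<rat>" "s \<in> \<rat>" "0 \<le> r" "r < s"
      and S: "S = {x \<in> {c..d}. lo_pt F r x \<and> hi_pt F s x}" by auto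
    show "negligible S" unfolding S
    proof (rule lemM[OF mono cont rs(3,4), of _ c d])
      show "{x \<in> {c..d}. lo_pt F r x \<and> hi_pt F s x} \<subseteq> {c..d}" by auto
    qed (auto simp: lo_pt_def hi_pt_def)
  qed
  have "negligible (?A \<union> \<Union>?B)" by (rule negligible_Un[OF nA nB])
  then show ?thesis by (rule negligible_subset[OF _ sub])
qed

lemma mono_on_negligible:
  fixes f :: "real \<Rightarrow> real"
  assumes cd: "c \<le> d" and cont: "continuous_on {c..d} f"
    and mono: "\<And>x y. c \<le> x \<Longrightarrow> x \<le> y \<Longrightarrow> y \<le> d \<Longrightarrow> f x \<le> f y"
  shows "negligible {x \<in> {c<..<d}. \<not> f differentiable (at x)}"
proof -
  define F where "F x = f (max c (min d x))" for x
  have Fm: "F x \<le> F y" if "x \<le> y" for x y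
    unfolding F_def using that cd by (intro mono) auto
  have "continuous_on UNIV (\<lambda>x. max c (min d x))" by (intro continuous_intros)
  moreover have "(\<lambda>x. max c (min d x)) ` UNIV \<subseteq> {c..d}" using cd by auto
  ultimately have Fc: "continuous_on UNIV F"
    unfolding F_def by (rule continuous_on_compose2[OF cont])
  have N: "negligible {x \<in> {c..d}. \<not> F differentiable (at x)}"
    by (rule mono_F_negligible[OF Fm Fc])
  have "{x \<in> {c<..<d}. \<not> f differentiable (at x)} \<subseteq> {x \<in> {c..d}. \<not> F differentiable (at x)}"
  proof
    fix x assume xx: "x \<in> {x \<in> {c<..<d}. \<not> f differentiable (at x)}"
    then have x: "c < x" "x < d" and nf: "\<not> f differentiable (at x)" by auto
    have "\<not> F differentiable (at x)"
    proof
      assume "F differentiable (at x)"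
      then obtain D where D: "(F has_real_derivative D) (at x)" using real_differentiable_def by blast
      have "(f has_real_derivative D) (at x)"
        by (rule has_field_derivative_transform_within_open[OF D, of "{c<..<d}"]) (use x in \<open>auto simp: F_def\<close>)
      then show False using nf real_differentiable_def by blast
    qed
    then show "x \<in> {x \<in> {c..d}. \<not> F differentiable (at x)}" using x by auto
  qed
  then show ?thesis by (rule negligible_subset[OF N])
qed


lemma localmin_visc:
  fixes \<phi> :: "real \<Rightarrow> real"
  assumes V: "open V" "y \<in> V" "V \<subseteq> {a<..<b}" and mn: "\<forall>z\<in>V. \<phi> y \<le> \<phi> z"
  shows "0 \<in> visc_subdiff a b \<phi> y"
proof -
  have "C1_on V (\<lambda>_. \<phi> y)"
    unfolding C1_on_def by (rule exI[of _ "\<lambda>_. 0"]) (auto intro: DERIV_const)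
  then show ?thesis unfolding visc_subdiff_def using V mn
    by (intro CollectI exI[of _ V] exI[of _ "\<lambda>_. \<phi> y"]) (auto intro: DERIV_const)
qed

lemma unimodal_negligible:
  fixes \<phi> :: "real \<Rightarrow> real"
  assumes pq: "p < q" and cont: "continuous_on {p..q} \<phi>"
    and nomin: "\<And>y V. open V \<Longrightarrow> y \<in> V \<Longrightarrow> V \<subseteq> {p<..<q} \<Longrightarrow> \<not> (\<forall>z\<in>V. \<phi> y \<le> \<phi> z)"
  shows "negligible {x \<in> {p<..<q}. \<not> \<phi> differentiable (at x)}"
proof -
  obtain m where m: "m \<in> {p..q}" "\<forall>x\<in>{p..q}. \<phi> x \<le> \<phi> m"
    using continuous_attains_sup[OF compact_Icc _ cont] pq by auto
  have inc: "\<phi> x \<le> \<phi> y" if xy: "p \<le> x" "x \<le> y" "y \<le> m" for x y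
  proof (rule ccontr)
    assume "\<not> \<phi> x \<le> \<phi> y"
    then have lt: "\<phi> y < \<phi> x" by simp
    have c2: "continuous_on {x..m} \<phi>" using m xy by (intro continuous_on_subset[OF cont]) auto
    obtain t where t: "t \<in> {x..m}" "\<forall>z\<in>{x..m}. \<phi> t \<le> \<phi> z"
      using continuous_attains_inf[OF compact_Icc _ c2] xy by auto
    have "\<phi> t \<le> \<phi> y" using t xy by auto
    moreover have "\<phi> x \<le> \<phi> m" using m xy by auto
    ultimately have "t \<noteq> x" "t \<noteq> m" using lt by auto
    then have tV: "t \<in> {x<..<m}" using t by auto
    have "{x<..<m} \<subseteq> {p<..<q}" using xy m by auto
    moreover have "\<forall>z\<in>{x<..<m}. \<phi> t \<le> \<phi> z" using t by auto
    ultimately show False using nomin[of "{x<..<m}" t] tV by auto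
  qed
  have dec: "\<phi> y \<le> \<phi> x" if xy: "m \<le> x" "x \<le> y" "y \<le> q" for x y
  proof (rule ccontr)
    assume "\<not> \<phi> y \<le> \<phi> x"
    then have lt: "\<phi> x < \<phi> y" by simp
    have c2: "continuous_on {m..y} \<phi>" using m xy by (intro continuous_on_subset[OF cont]) auto
    obtain t where t: "t \<in> {m..y}" "\<forall>z\<in>{m..y}. \<phi> t \<le> \<phi> z"
      using continuous_attains_inf[OF compact_Icc _ c2] xy by auto
    have "\<phi> t \<le> \<phi> x" using t xy by auto
    moreover have "\<phi> y \<le> \<phi> m" using m xy by auto
    ultimately have "t \<noteq> y" "t \<noteq> m" using lt by auto
    then have tV: "t \<in> {m<..<y}" using t by auto
    have "{m<..<y} \<subseteq> {p<..<q}" using xy m by auto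
    moreover have "\<forall>z\<in>{m<..<y}. \<phi> t \<le> \<phi> z" using t by auto
    ultimately show False using nomin[of "{m<..<y}" t] tV by auto
  qed
  have N1: "negligible {x \<in> {p<..<m}. \<not> \<phi> differentiable (at x)}"
  proof (rule mono_on_negligible)
    show "p \<le> m" using m by auto
    show "continuous_on {p..m} \<phi>" using m by (intro continuous_on_subset[OF cont]) auto
  qed (use inc in auto)
  have N2: "negligible {x \<in> {m<..<q}. \<not> (\<lambda>x. - \<phi> x) differentiable (at x)}"
  proof (rule mono_on_negligible)
    show "m \<le> q" using m by auto
    show "continuous_on {m..q} (\<lambda>x. - \<phi> x)" using m
      by (intro continuous_intros continuous_on_subset[OF cont]) auto
  qed (use dec in auto)
  have sub: "{x \<in> {p<..<q}. \<not> \<phi> differentiable (at x)} \<subseteq>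
        {x \<in> {p<..<m}. \<not> \<phi> differentiable (at x)} \<union> {x \<in> {m<..<q}. \<not> (\<lambda>x. - \<phi> x) differentiable (at x)} \<union> {m}"
  proof
    fix x assume x: "x \<in> {x \<in> {p<..<q}. \<not> \<phi> differentiable (at x)}"
    have "\<not> (\<lambda>x. - \<phi> x) differentiable (at x)"
    proof
      assume "(\<lambda>x. - \<phi> x) differentiable (at x)"
      then have "(\<lambda>x. - (- \<phi> x)) differentiable (at x)" by (rule differentiable_minus)
      then show False using x by simp
    qed
    then show "x \<in> {x \<in> {p<..<m}. \<not> \<phi> differentiable (at x)} \<union> {x \<in> {m<..<q}. \<not> (\<lambda>x. - \<phi> x) differentiable (at x)} \<union> {m}"
      using x by (cases "x < m"; cases "x = m") auto
  qed
  have nU: "negligible ({x \<in> {p<..<m}. \<not> \<phi> differentiable (at x)} \<union> {x \<in> {m<..<q}. \<not> (\<lambda>x. - \<phi> x) differentiable (at x)} \<union> {m})"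
    by (intro negligible_Un N1 N2 negligible_sing)
  show ?thesis by (rule negligible_subset[OF nU sub])
qed

theorem proposition2p8:
  fixes a b :: real and \<phi> :: "real \<Rightarrow> real"
  assumes "a < b" and "continuous_on {a<..<b} \<phi>"
  shows "AE x in lebesgue. x \<in> {a<..<b} \<longrightarrow>
           (\<phi> differentiable (at x) \<or>
            ((\<exists>xs. (\<forall>k. xs k \<in> {a<..<b} \<and> 0 \<in> visc_subdiff a b \<phi> (xs k)) \<and> xs \<longlonglongrightarrow> x)
             \<and> 0 \<in> lim_subdiff a b \<phi> x))"
proof -
  let ?Z = "{y. 0 \<in> visc_subdiff a b \<phi> y}"
  have Zab: "?Z \<subseteq> {a<..<b}" unfolding visc_subdiff_def by blast
  let ?U = "{a<..<b} - closure ?Z"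
  have Uo: "open ?U" by (intro open_Diff) auto
  let ?Iq = "{(p::real,q::real). p \<in> \<rat> \<and> q \<in> \<rat> \<and> p < q \<and> {p..q} \<subseteq> ?U}"
  let ?N = "\<Union>((\<lambda>(p,q). {x \<in> {p<..<q}. \<not> \<phi> differentiable (at x)}) ` ?Iq)"
  have cI: "countable ?Iq"
  proof -
    have "?Iq \<subseteq> \<rat> \<times> \<rat>" by auto
    moreover have "countable (\<rat> \<times> (\<rat>::real set))" by (intro countable_SIGMA countable_rat)
    ultimately show ?thesis by (rule countable_subset)
  qed
  have nN: "negligible ?N"
  proof (rule negligible_countable_Union)
    show "countable ((\<lambda>(p,q). {x \<in> {p<..<q}. \<not> \<phi> differentiable (at x)}) ` ?Iq)" using cI by simp
    fix S assume "S \<in> (\<lambda>(p,q). {x \<in> {p<..<q}. \<not> \<phi> differentiable (at x)}) ` ?Iq"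
    then obtain p q where pq: "p < q" "{p..q} \<subseteq> ?U"
      and S: "S = {x \<in> {p<..<q}. \<not> \<phi> differentiable (at x)}" by auto
    show "negligible S" unfolding S
    proof (rule unimodal_negligible[OF pq(1)])
      show "continuous_on {p..q} \<phi>" using pq(2) by (intro continuous_on_subset[OF assms(2)]) auto
      fix y V assume V: "open V" "y \<in> V" "V \<subseteq> {p<..<q}"
      show "\<not> (\<forall>z\<in>V. \<phi> y \<le> \<phi> z)"
      proof
        assume mn: "\<forall>z\<in>V. \<phi> y \<le> \<phi> z"
        have "{p<..<q} \<subseteq> {p..q}" by auto
        then have "V \<subseteq> {a<..<b}" using V(3) pq(2) by blast
        then have "y \<in> ?Z" using localmin_visc[OF V(1,2) _ mn] by simp
        then have yc: "y \<in> closure ?Z" by (rule subsetD[OF closure_subset])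
        have "y \<in> {p..q}" using V(2,3) \<open>{p<..<q} \<subseteq> {p..q}\<close> by blast
        then have "y \<in> ?U" using pq(2) by blast
        then show False using yc by simp
      qed
    qed
  qed
  show ?thesis
  proof (rule AE_I')
    show "?N \<in> null_sets lebesgue" using nN unfolding negligible_iff_null_sets .
    show "{x \<in> space lebesgue. \<not> (x \<in> {a<..<b} \<longrightarrow>
           (\<phi> differentiable (at x) \<or>
            ((\<exists>xs. (\<forall>k. xs k \<in> {a<..<b} \<and> 0 \<in> visc_subdiff a b \<phi> (xs k)) \<and> xs \<longlonglongrightarrow> x)
             \<and> 0 \<in> lim_subdiff a b \<phi> x)))} \<subseteq> ?N"
    proof
      fix x assume "x \<in> {x \<in> space lebesgue. \<not> (x \<in> {a<..<b} \<longrightarrow>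
           (\<phi> differentiable (at x) \<or>
            ((\<exists>xs. (\<forall>k. xs k \<in> {a<..<b} \<and> 0 \<in> visc_subdiff a b \<phi> (xs k)) \<and> xs \<longlonglongrightarrow> x)
             \<and> 0 \<in> lim_subdiff a b \<phi> x)))}"
      then have xab: "x \<in> {a<..<b}" and nd: "\<not> \<phi> differentiable (at x)"
        and nseq: "\<not> ((\<exists>xs. (\<forall>k. xs k \<in> {a<..<b} \<and> 0 \<in> visc_subdiff a b \<phi> (xs k)) \<and> xs \<longlonglongrightarrow> x)
             \<and> 0 \<in> lim_subdiff a b \<phi> x)" by auto
      have "x \<notin> closure ?Z"
      proof
        assume "x \<in> closure ?Z"
        then obtain xs where xs: "\<forall>n. xs n \<in> ?Z" "xs \<longlonglongrightarrow> x" by (auto simp: closure_sequential)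
        have xs2: "\<forall>k. xs k \<in> {a<..<b} \<and> 0 \<in> visc_subdiff a b \<phi> (xs k)" using xs(1) Zab by auto
        have "0 \<in> lim_subdiff a b \<phi> x" unfolding lim_subdiff_def
          by (intro CollectI exI[of _ xs] exI[of _ "\<lambda>_. 0"]) (use xs2 xs(2) in auto)
        then show False using nseq xs2 xs(2) by blast
      qed
      then have xU: "x \<in> ?U" using xab by auto
      obtain e where e: "e > 0" "ball x e \<subseteq> ?U" using Uo xU openE by blast
      obtain p where p: "p \<in> \<rat>" "x - e/2 < p" "p < x" using Rats_dense_in_real[of "x - e/2" x] e by auto
      obtain q where q: "q \<in> \<rat>" "x < q" "q < x + e/2" using Rats_dense_in_real[of x "x + e/2"] e by auto
      have "{p..q} \<subseteq> ball x e" using p q e by (auto simp: dist_real_def)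
      then have "(p,q) \<in> ?Iq" using p q e by auto
      moreover have "x \<in> {x \<in> {p<..<q}. \<not> \<phi> differentiable (at x)}" using p q nd by auto
      ultimately show "x \<in> ?N" by (intro UN_I[of "(p,q)"]) auto
    qed
  qed
qed

end
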